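(* For every integer $k\ge 2$ and every positive integer $n$, \[ \mathrm{ex}_3\big(n, C^{(3)}_{2k+1}\big)\le t_{2k+1}(n)+4\,\mathrm{ex}(n,C_{2k})+12\,\mathrm{ex}^{\mathrm{lin}}_3\big(n, C^{(3)}_{2k+1}\big). \]
   Context: A 3-uniform hypergraph is a set of 3-element subsets (hyperedges) of a vertex set. A Berge cycle of length $m$ in a hypergraph is a family of $m$ distinct hyperedges $H_0,\dots,H_{m-1}$ for which there exist distinct vertices $v_0,\dots,v_{m-1}$ with $\{v_i,v_{i+1}\}\subset H_i$ for $0\le i\le m-1$ (indices mod $m$). $C^{(3)}_m$ denotes the family of 3-uniform Berge cycles of length $m$; a hypergraph is $C^{(3)}_m$-free if it contains no Berge cycle of length $m$. A hypergraph is linear if any two distinct hyperedges share at most one vertex. $\mathrm{ex}_3(n,C^{(3)}_m)$ (resp. $\mathrm{ex}^{\mathrm{lin}}_3(n,C^{(3)}_m)$) is the maximum number of hyperedges in a 3-uniform (resp. 3-uniform linear) hypergraph on $n$ vertices with no Berge cycle of length $m$. $\mathrm{ex}(n,C_{2k})$ is the maximum number of edges of a simple graph on $n$ vertices with no cycle of length $2k$. $t_\ell(n)$ is the maximum number of triangles in a simple graph on $n$ vertices containing no cycle of length $\ell$. *)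

theory Defs
  imports Main
begin

definition triple_hypergraph :: "nat \<Rightarrow> nat set set \<Rightarrow> bool" where
  "triple_hypergraph n H \<longleftrightarrow> (\<forall>e\<in>H. e \<subseteq> {..<n} \<and> card e = 3)"

definition linear_hypergraph :: "nat set set \<Rightarrow> bool" where
  "linear_hypergraph H \<longleftrightarrow> (\<forall>A\<in>H. \<forall>B\<in>H. A \<noteq> B \<longrightarrow> card (A \<inter> B) \<le> 1)"

definition has_berge_cycle :: "nat set set \<Rightarrow> nat \<Rightarrow> bool" where
  "has_berge_cycle H m \<longleftrightarrow>
     (\<exists>E :: nat \<Rightarrow> nat set. \<exists>v :: nat \<Rightarrow> nat.
        inj_on E {..<m} \<and> inj_on v {..<m} \<and>
        (\<forall>i<m. E i \<in> H \<and> {v i, v ((i + 1) mod m)} \<subseteq> E i))"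

definition ex3 :: "nat \<Rightarrow> nat \<Rightarrow> nat" where
  "ex3 n m = Max {card H | H. triple_hypergraph n H \<and> \<not> has_berge_cycle H m}"

definition ex3_lin :: "nat \<Rightarrow> nat \<Rightarrow> nat" where
  "ex3_lin n m = Max {card H | H. triple_hypergraph n H \<and> linear_hypergraph H
                                   \<and> \<not> has_berge_cycle H m}"

definition simple_graph :: "nat \<Rightarrow> nat set set \<Rightarrow> bool" where
  "simple_graph n G \<longleftrightarrow> (\<forall>e\<in>G. e \<subseteq> {..<n} \<and> card e = 2)"

definition has_cycle :: "nat set set \<Rightarrow> nat \<Rightarrow> bool" where
  "has_cycle G m \<longleftrightarrow>
     (\<exists>v :: nat \<Rightarrow> nat. inj_on v {..<m} \<and> (\<forall>i<m. {v i, v ((i + 1) mod m)} \<in> G))"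

definition ex_graph :: "nat \<Rightarrow> nat \<Rightarrow> nat" where
  "ex_graph n m = Max {card G | G. simple_graph n G \<and> \<not> has_cycle G m}"

definition triangles :: "nat set set \<Rightarrow> nat set set" where
  "triangles G = {T. card T = 3 \<and> (\<forall>x\<in>T. \<forall>y\<in>T. x \<noteq> y \<longrightarrow> {x, y} \<in> G)}"

definition t_tri :: "nat \<Rightarrow> nat \<Rightarrow> nat" where
  "t_tri m n = Max {card (triangles G) | G. simple_graph n G \<and> \<not> has_cycle G m}"

end

theory Submission
  imports Defs
begin

lemma s_eq: "(i::nat) < m \<Longrightarrow> (i+1) mod m = (if i+1 = m then 0 else i+1)"
  by auto

lemma s_eq': "(i::nat) < m \<Longrightarrow> Suc i mod m = (if Suc i = m then 0 else Suc i)"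
  by auto

lemma s_lt: "0 < (m::nat) \<Longrightarrow> (i+1) mod m < m" by simp

lemma s_inj: "(i::nat) < m \<Longrightarrow> j < m \<Longrightarrow> (i+1) mod m = (j+1) mod m \<Longrightarrow> i = j"
  by (auto simp: s_eq s_eq' split: if_splits)

lemma s_neq: "2 \<le> (m::nat) \<Longrightarrow> i < m \<Longrightarrow> (i+1) mod m \<noteq> i"
  by (auto simp: s_eq s_eq' split: if_splits)

lemma ss_neq: "3 \<le> (m::nat) \<Longrightarrow> i < m \<Longrightarrow> ((i+1) mod m + 1) mod m \<noteq> i"
proof (cases "i + 1 = m")
  case True
  assume "3 \<le> m" "i < m"
  then show ?thesis using True by simp
next
  case False
  assume a: "3 \<le> m" "i < m"
  then have "(i+1) mod m = i + 1" using False by simp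
  moreover have "(i+1+1) mod m \<noteq> i" using a False by (cases "i+2 = m") (auto simp: mod_less)
  ultimately show ?thesis by simp
qed

lemma cyc_edges_inj:
  assumes "3 \<le> (m::nat)" "inj_on v {..<m}" "i < m" "j < m"
    "{v i, v ((i+1) mod m)} = {v j, v ((j+1) mod m)}"
  shows "i = j"
proof -
  have lt: "(i+1) mod m < m" "(j+1) mod m < m" using assms by auto
  from assms(5) have "(v i = v j \<and> v ((i+1) mod m) = v ((j+1) mod m)) \<or>
     (v i = v ((j+1) mod m) \<and> v ((i+1) mod m) = v j)" by (auto simp: doubleton_eq_iff)
  then show ?thesis
  proof
    assume "v i = v j \<and> v ((i+1) mod m) = v ((j+1) mod m)"
    then show ?thesis using assms lt by (auto dest: inj_onD)
  next
    assume a: "v i = v ((j+1) mod m) \<and> v ((i+1) mod m) = v j"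
    then have "i = (j+1) mod m" "(i+1) mod m = j" using assms lt
      by (auto dest: inj_onD)
    then show ?thesis using ss_neq[OF assms(1) assms(4)] by simp
  qed
qed

lemma berge_insert:
  assumes m2: "m \<ge> 2" and vinj: "inj_on v {..<m}" and Einj: "inj_on E {..<m}"
    and Ein: "\<forall>i. 1 \<le> i \<and> i < m \<longrightarrow> E i \<in> H \<and> {v i, v ((i+1) mod m)} \<subseteq> E i"
    and w: "w \<notin> v ` {..<m}" and A: "A \<in> H" "{v 0, w} \<subseteq> A" and B: "B \<in> H" "{w, v 1} \<subseteq> B"
    and AB: "A \<noteq> B" "A \<notin> E ` {1..<m}" "B \<notin> E ` {1..<m}"
  shows "has_berge_cycle H (Suc m)"
proof -
  define V where "V j = (if j = 0 then v 0 else if j = 1 then w else v (j - 1))" for j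
  define F where "F j = (if j = 0 then A else if j = 1 then B else E (j - 1))" for j
  have "inj_on V {..<Suc m}"
  proof (rule inj_onI)
    fix x y assume xy: "x \<in> {..<Suc m}" "y \<in> {..<Suc m}" "V x = V y"
    show "x = y"
    proof (cases "x = 0 \<or> x = 1 \<or> y = 0 \<or> y = 1")
      case True
      then show ?thesis using xy w m2 vinj unfolding V_def
        by (auto split: if_splits dest: inj_onD)
    next
      case False
      then have "v (x - 1) = v (y - 1)" using xy unfolding V_def by auto
      then have "x - 1 = y - 1" using xy vinj by (auto dest: inj_onD)
      then show ?thesis using False by auto
    qed
  qed
  moreover have "inj_on F {..<Suc m}"
  proof (rule inj_onI)
    fix x y assume xy: "x \<in> {..<Suc m}" "y \<in> {..<Suc m}" "F x = F y"
    show "x = y"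
    proof (cases "x = 0 \<or> x = 1 \<or> y = 0 \<or> y = 1")
      case True
      have im: "E (z - 1) \<in> E ` {1..<m}" if "2 \<le> z" "z < Suc m" for z
        using that by (intro imageI) auto
      show ?thesis
        using True xy AB im[of x] im[of y] unfolding F_def
        by (cases "x = 0 \<or> x = 1"; cases "y = 0 \<or> y = 1") (auto split: if_splits)
    next
      case False
      then have "E (x - 1) = E (y - 1)" using xy unfolding F_def by auto
      then have "x - 1 = y - 1" using xy Einj by (auto dest: inj_onD)
      then show ?thesis using False by auto
    qed
  qed
  moreover have "\<forall>j<Suc m. F j \<in> H \<and> {V j, V ((j + 1) mod Suc m)} \<subseteq> F j"
  proof (intro allI impI)
    fix j assume j: "j < Suc m"
    consider "j = 0" | "j = 1" | "2 \<le> j" "j < m" | "j = m" using j m2 by linarith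
    then show "F j \<in> H \<and> {V j, V ((j + 1) mod Suc m)} \<subseteq> F j"
    proof cases
      case 1 then show ?thesis using A m2 by (simp add: V_def F_def)
    next
      case 2 then show ?thesis using B m2 by (simp add: V_def F_def)
    next
      case 3
      have "(j+1) mod Suc m = j + 1" using 3 by simp
      moreover have "(j - 1 + 1) mod m = j" using 3 by simp
      moreover have "1 \<le> j - 1 \<and> j - 1 < m" using 3 by arith
      ultimately show ?thesis using 3 Ein[rule_format, of "j - 1"] by (simp add: V_def F_def)
    next
      case 4
      have "(m - 1 + 1) mod m = 0" using m2 by simp
      then show ?thesis using 4 m2 Ein[rule_format, of "m - 1"] by (simp add: V_def F_def)
    qed
  qed
  ultimately show ?thesis unfolding has_berge_cycle_def by blast
qed

definition mult :: "nat set set \<Rightarrow> nat set \<Rightarrow> nat" where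
  "mult H e = card {B\<in>H. e \<subseteq> B}"

lemma card3_eq:
  assumes "card B = 3" "S \<subseteq> B" "card S = 3" shows "S = B"
  using assms by (metis card_subset_eq card.infinite zero_neq_numeral)

lemma T_no_cycle:
  assumes fin: "finite H" and card3: "\<forall>B\<in>H. card B = 3" and nb: "\<not> has_berge_cycle H m"
    and m3: "3 \<le> m"
  shows "\<not> has_cycle {e. card e = 2 \<and> mult H e \<ge> 2} m"
proof
  assume "has_cycle {e. card e = 2 \<and> mult H e \<ge> 2} m"
  then obtain v where vinj: "inj_on v {..<m}"
    and ed: "\<forall>i<m. {v i, v ((i + 1) mod m)} \<in> {e. card e = 2 \<and> mult H e \<ge> 2}"
    unfolding has_cycle_def by blast
  define s where "s i = (i + 1) mod m" for i
  have sl: "s i < m" for i using m3 by (simp add: s_def)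
  have vi: "v x = v y \<longleftrightarrow> x = y" if "x < m" "y < m" for x y
    using vinj that by (auto dest: inj_onD)
  have sinj: "s x = s y \<longleftrightarrow> x = y" if "x < m" "y < m" for x y
    using s_inj that by (auto simp: s_def)
  have sn: "s x \<noteq> x" if "x < m" for x using s_neq[of m x] that m3 by (simp add: s_def)
  have ssn: "s (s x) \<noteq> x" if "x < m" for x using ss_neq[of m x] that m3 by (simp add: s_def)
  define T where "T i = {v i, v (s i), v (s (s i))}" for i
  have ex: "\<exists>B. B \<in> H \<and> {v i, v (s i)} \<subseteq> B \<and> B \<noteq> T i" if "i < m" for i
  proof (rule ccontr)
    assume "\<not> ?thesis"
    then have "{B\<in>H. {v i, v (s i)} \<subseteq> B} \<subseteq> {T i}" by auto
    then have "card {B\<in>H. {v i, v (s i)} \<subseteq> B} \<le> card {T i}"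
      by (intro card_mono) auto
    then have "card {B\<in>H. {v i, v (s i)} \<subseteq> B} \<le> 1" by simp
    moreover have "mult H {v i, v (s i)} \<ge> 2" using ed that by (simp add: s_def)
    ultimately show False by (simp add: mult_def)
  qed
  define E where "E i = (SOME B. B \<in> H \<and> {v i, v (s i)} \<subseteq> B \<and> B \<noteq> T i)" for i
  have E: "E i \<in> H \<and> {v i, v (s i)} \<subseteq> E i \<and> E i \<noteq> T i" if "i < m" for i
    unfolding E_def using someI_ex[OF ex[OF that]] .
  have "inj_on E {..<m}"
  proof (rule inj_onI, rule ccontr)
    fix i j assume i: "i \<in> {..<m}" and j: "j \<in> {..<m}" and eq: "E i = E j" and ne: "i \<noteq> j"
    have i': "i < m" and j': "j < m" using i j by auto
    have cB: "card (E i) = 3" using E[OF i'] card3 by auto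
    have sub: "{v i, v (s i), v j, v (s j)} \<subseteq> E i" using E[OF i'] E[OF j'] eq by auto
    consider "j = s i" | "i = s j" | "j \<noteq> s i" "i \<noteq> s j" by blast
    then show False
    proof cases
      case 1
      have d1: "v i \<noteq> v (s i)" "v i \<noteq> v (s (s i))" "v (s i) \<noteq> v (s (s i))"
        using vi sl sn ssn i' by (metis sl sn ssn)+
      have "card (T i) = 3" unfolding T_def using d1 by simp
      moreover have "T i \<subseteq> E i" using sub 1 by (auto simp: T_def)
      ultimately have "T i = E i" using cB card3_eq by blast
      then show False using E[OF i'] by simp
    next
      case 2
      have d1: "v j \<noteq> v (s j)" "v j \<noteq> v (s (s j))" "v (s j) \<noteq> v (s (s j))"
        using vi sl sn ssn j' by (metis sl sn ssn)+
      have "card (T j) = 3" unfolding T_def using d1 by simp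
      moreover have "T j \<subseteq> E j" using sub 2 eq by (auto simp: T_def)
      ultimately have "T j = E j" using cB eq card3_eq by metis
      then show False using E[OF j'] by simp
    next
      case 3
      have "card {v i, v (s i), v j, v (s j)} = 4"
        using vi[of i "s i"] vi[of i j] vi[of i "s j"] vi[of "s i" j] vi[of "s i" "s j"] vi[of j "s j"]
          sinj[of i j] sl[of i] sl[of j] sn[of i] sn[of j] i' j' ne 3 by simp
      moreover have "card {v i, v (s i), v j, v (s j)} \<le> card (E i)"
        using sub cB by (intro card_mono) (auto intro: card_ge_0_finite)
      ultimately show False using cB by simp
    qed
  qed
  moreover have "\<forall>i<m. E i \<in> H \<and> {v i, v ((i + 1) mod m)} \<subseteq> E i" using E by (simp add: s_def)
  ultimately have "has_berge_cycle H m" using vinj unfolding has_berge_cycle_def by blast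
  then show False using nb by simp
qed

definition condX :: "nat set \<Rightarrow> nat set \<Rightarrow> nat set \<Rightarrow> bool" where
  "condX X p h \<longleftrightarrow> (p \<subseteq> X \<and> h - p \<subseteq> -X) \<or> (p \<subseteq> -X \<and> h - p \<subseteq> X)"

lemma condX_compl: "condX (-X) p h = condX X p h"
  unfolding condX_def by auto

lemma two_avoid:
  assumes "finite H" "mult H f \<ge> 3"
  shows "\<exists>g\<in>H. f \<subseteq> g \<and> g \<noteq> a \<and> g \<noteq> b"
proof (rule ccontr)
  assume "\<not> ?thesis"
  then have "{B\<in>H. f \<subseteq> B} \<subseteq> {a, b}" by auto
  then have "card {B\<in>H. f \<subseteq> B} \<le> card {a, b}" by (intro card_mono) auto
  also have "\<dots> \<le> 2" by (simp add: card_insert_if)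
  finally show False using assms by (simp add: mult_def)
qed

lemma M3_no_cycle:
  assumes fin: "finite H" and card3: "\<forall>B\<in>H. card B = 3" and nb: "\<not> has_berge_cycle H (Suc m)"
    and m3: "3 \<le> m" and S: "S \<subseteq> H"
    and Sp: "\<forall>h\<in>S. p h \<subseteq> h \<and> card (p h) = 2 \<and> mult H (p h) = 1 \<and> condX X (p h) h
              \<and> (\<exists>f. f \<subseteq> h \<and> card f = 2 \<and> mult H f \<ge> 3)"
  shows "\<not> has_cycle (p ` S) m"
proof
  assume "has_cycle (p ` S) m"
  then obtain v where vinj: "inj_on v {..<m}"
    and ed: "\<forall>i<m. {v i, v ((i + 1) mod m)} \<in> p ` S"
    unfolding has_cycle_def by blast
  define s where "s i = (i + 1) mod m" for i
  have sl: "s i < m" for i using m3 by (simp add: s_def)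
  have vi: "v x = v y \<longleftrightarrow> x = y" if "x < m" "y < m" for x y
    using vinj that by (auto dest: inj_onD)
  have sinj: "s x = s y \<longleftrightarrow> x = y" if "x < m" "y < m" for x y
    using s_inj that by (auto simp: s_def)
  have s0: "s 0 = 1" using m3 by (simp add: s_def)
  have sm: "s (m - 1) = 0" using m3 by (simp add: s_def)
  have ex: "\<exists>h. h \<in> S \<and> p h = {v i, v (s i)}" if "i < m" for i
    using ed that unfolding s_def by force
  define hs where "hs i = (SOME h. h \<in> S \<and> p h = {v i, v (s i)})" for i
  have hs: "hs i \<in> S \<and> p (hs i) = {v i, v (s i)}" if "i < m" for i
    unfolding hs_def using someI_ex[OF ex[OF that]] .
  have hsinj: "inj_on hs {..<m}"
  proof (rule inj_onI)
    fix i j assume "i \<in> {..<m}" "j \<in> {..<m}" "hs i = hs j"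
    then have "{v i, v ((i+1) mod m)} = {v j, v ((j+1) mod m)}" "i < m" "j < m"
      using hs[of i] hs[of j] by (auto simp: s_def)
    then show "i = j" using cyc_edges_inj[OF m3 vinj] by blast
  qed
  define Y where "Y = (if v 0 \<in> X then X else -X)"
  have condY: "condX Y (p h) h" if "h \<in> S" for h
    using Sp that condX_compl[of X] unfolding Y_def by auto
  have side: "\<forall>i. i < m \<longrightarrow> v i \<in> Y"
  proof (intro allI)
    fix i show "i < m \<longrightarrow> v i \<in> Y"
    proof (induction i)
      case 0 then show ?case by (simp add: Y_def)
    next
      case (Suc i)
      show ?case
      proof
        assume a: "Suc i < m"
        then have vi: "v i \<in> Y" using Suc by simp
        have ai: "i < m" using a by simp
        have "condX Y (p (hs i)) (hs i)" using condY[OF conjunct1[OF hs[OF ai]]] .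
        then have "p (hs i) \<subseteq> Y" using vi hs[of i] a unfolding condX_def by auto
        moreover have "s i = Suc i" using a by (simp add: s_def)
        ultimately show "v (Suc i) \<in> Y" using hs[of i] a by auto
      qed
    qed
  qed
  have pY: "p (hs i) \<subseteq> Y \<and> hs i - p (hs i) \<subseteq> -Y" if "i < m" for i
  proof -
    have "condX Y (p (hs i)) (hs i)" using condY[OF conjunct1[OF hs[OF that]]] .
    moreover have "v i \<in> p (hs i)" using hs that by simp
    ultimately show ?thesis using side that unfolding condX_def by auto
  qed
  have key: "u \<in> p (hs i)" if "u \<in> Y" "u \<in> hs i" "i < m" for u i
    using pY[OF that(3)] that by auto
  define h0 where "h0 = hs 0"
  have m0: "0 < m" using m3 by simp
  have h0S: "h0 \<in> S" and ph0: "p h0 = {v 0, v 1}" using hs[OF m0] s0 by (auto simp: h0_def)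
  have h0H: "h0 \<in> H" using h0S S by auto
  have ph0sub: "p h0 \<subseteq> h0" and cp: "card (p h0) = 2" and mp: "mult H (p h0) = 1"
    using Sp h0S by auto
  have ch0: "card h0 = 3" using card3 h0H by auto
  have fh0: "finite h0" using ch0 by (metis card.infinite zero_neq_numeral)
  have "card (h0 - p h0) = 1" using card_Diff_subset[OF finite_subset[OF ph0sub fh0] ph0sub] ch0 cp
    by simp
  then obtain w where w: "h0 - p h0 = {w}" by (meson card_1_singletonE)
  have wY: "w \<notin> Y" using pY[OF m0] w by (auto simp: h0_def)
  have wnot: "w \<notin> v ` {..<m}" using side wY by auto
  have wh0: "w \<in> h0" using w by auto
  obtain f where f: "f \<subseteq> h0" "card f = 2" "mult H f \<ge> 3" using Sp h0S by blast
  have "f \<noteq> p h0" using f mp by auto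
  then have wf: "w \<in> f"
  proof -
    assume ne: "f \<noteq> p h0"
    show "w \<in> f"
    proof (rule ccontr)
      assume "w \<notin> f"
      then have "f \<subseteq> p h0" using f w by auto
      then have "f = p h0" using card_subset_eq[OF finite_subset[OF ph0sub fh0]] f cp by simp
      then show False using ne by simp
    qed
  qed
  have "card (f - {w}) = 1" using f wf by simp
  then obtain u where u: "f - {w} = {u}" by (meson card_1_singletonE)
  have fu: "f = {u, w}" using u wf by auto
  have uh0: "u \<in> p h0" using u f w by auto
  have uY: "u \<in> Y" using uh0 pY[OF m0] by (auto simp: h0_def)
  have mu: "mult H {u, w} \<ge> 3" using f fu by simp
  have Ein: "\<forall>i. 1 \<le> i \<and> i < m \<longrightarrow> hs i \<in> H \<and> {v i, v ((i+1) mod m)} \<subseteq> hs i"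
    using hs Sp S unfolding s_def by fastforce
  have h0not: "h0 \<notin> hs ` {1..<m}"
  proof
    assume "h0 \<in> hs ` {1..<m}"
    then obtain i where "i \<in> {1..<m}" "hs 0 = hs i" unfolding h0_def by auto
    then show False using hsinj m0 by (auto dest: inj_onD)
  qed
  have m2: "2 \<le> m" using m3 by simp
  from uh0 ph0 have "u = v 0 \<or> u = v 1" by auto
  then show False
  proof
    assume uv: "u = v 0"
    obtain g where g: "g \<in> H" "{u, w} \<subseteq> g" "g \<noteq> h0" "g \<noteq> hs (m - 1)"
      using two_avoid[OF fin mu, of h0 "hs (m - 1)"] by blast
    have gnot: "g \<notin> hs ` {1..<m}"
    proof
      assume "g \<in> hs ` {1..<m}"
      then obtain i where i: "1 \<le> i" "i < m" "g = hs i" by auto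
      then have "u \<in> p (hs i)" using key uY g by auto
      then have "v 0 = v i \<or> v 0 = v (s i)" using hs[of i] i uv by auto
      then have "0 = i \<or> 0 = s i" using vi[of 0 i] vi[of 0 "s i"] sl[of i] i m0 by auto
      then have "i = m - 1" using i sinj[of i "m-1"] sm by auto
      then show False using i g by simp
    qed
    have "has_berge_cycle H (Suc m)"
      by (rule berge_insert[OF m2 vinj hsinj Ein wnot g(1) _ h0H])
         (use g uv wh0 ph0 ph0sub gnot h0not in auto)
    then show False using nb by simp
  next
    assume uv: "u = v 1"
    obtain g where g: "g \<in> H" "{u, w} \<subseteq> g" "g \<noteq> h0" "g \<noteq> hs 1"
      using two_avoid[OF fin mu, of h0 "hs 1"] by blast
    have gnot: "g \<notin> hs ` {1..<m}"
    proof
      assume "g \<in> hs ` {1..<m}"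
      then obtain i where i: "1 \<le> i" "i < m" "g = hs i" by auto
      then have "u \<in> p (hs i)" using key uY g by auto
      then have "v 1 = v i \<or> v 1 = v (s i)" using hs[of i] i uv by auto
      then have "1 = i \<or> 1 = s i" using vi[of 1 i] vi[of 1 "s i"] sl[of i] i m3 by auto
      then have "i = 1" using i sinj[of i 0] s0 m0 by auto
      then show False using i g by simp
    qed
    have "has_berge_cycle H (Suc m)"
      by (rule berge_insert[OF m2 vinj hsinj Ein wnot h0H _ g(1)])
         (use g uv wh0 ph0 ph0sub gnot h0not in auto)
    then show False using nb by simp
  qed
qed

lemma count4:
  assumes U: "finite U" "a\<in>U" "b\<in>U" "c\<in>U" "a\<noteq>b" "a\<noteq>c" "b\<noteq>c"
  shows "4 * card {X \<in> Pow U. condX X {a,b} {a,b,c}} = 2 ^ card U"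
proof -
  define W where "W = U - {a,b,c}"
  have fW: "finite W" using U by (simp add: W_def)
  have cW: "card W = card U - 3" using U by (simp add: W_def card_Diff_subset)
  have c3: "card U \<ge> 3"
  proof -
    have "card {a,b,c} \<le> card U" using U by (intro card_mono) auto
    then show ?thesis using U by simp
  qed
  have eq: "{X \<in> Pow U. condX X {a,b} {a,b,c}} = (\<lambda>Z. Z \<union> {a,b}) ` Pow W \<union> insert c ` Pow W"
  proof (rule set_eqI, rule iffI)
    fix X assume X: "X \<in> {X \<in> Pow U. condX X {a,b} {a,b,c}}"
    then have XU: "X \<subseteq> U" and cX: "condX X {a,b} {a,b,c}" by auto
    have d: "{a,b,c} - {a,b} = {c}" using U by auto
    from cX d consider "a \<in> X" "b \<in> X" "c \<notin> X" | "a \<notin> X" "b \<notin> X" "c \<in> X"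
      unfolding condX_def by auto
    then show "X \<in> (\<lambda>Z. Z \<union> {a,b}) ` Pow W \<union> insert c ` Pow W"
    proof cases
      case 1
      then have "X = (X - {a,b}) \<union> {a,b}" "X - {a,b} \<in> Pow W" using XU by (auto simp: W_def)
      then show ?thesis by blast
    next
      case 2
      then have "X = insert c (X - {c})" "X - {c} \<in> Pow W" using XU by (auto simp: W_def)
      then show ?thesis by blast
    qed
  next
    fix X assume "X \<in> (\<lambda>Z. Z \<union> {a,b}) ` Pow W \<union> insert c ` Pow W"
    then show "X \<in> {X \<in> Pow U. condX X {a,b} {a,b,c}}"
      using U unfolding condX_def W_def by auto
  qed
  have i1: "inj_on (\<lambda>Z. Z \<union> {a,b}) (Pow W)"
    by (rule inj_onI) (auto simp: W_def)
  have i2: "inj_on (insert c) (Pow W)"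
    by (rule inj_onI) (auto simp: W_def)
  have disj: "(\<lambda>Z. Z \<union> {a,b}) ` Pow W \<inter> insert c ` Pow W = {}"
    using U by (auto simp: W_def)
  have "card {X \<in> Pow U. condX X {a,b} {a,b,c}} = 2 ^ card W + 2 ^ card W"
    unfolding eq using fW i1 i2 disj
    by (simp add: card_Un_disjoint card_image card_Pow)
  moreover have "card U = 3 + card W" using c3 cW by simp
  then have "(2::nat) ^ card U = 2 ^ 3 * 2 ^ card W"
    by (simp add: power_add)
  ultimately show ?thesis by simp
qed

lemma avg:
  fixes P :: "nat set \<Rightarrow> nat set \<Rightarrow> bool"
  assumes fU: "finite U" and fM: "finite M"
    and cnt: "\<forall>h\<in>M. 4 * card {X\<in>Pow U. P X h} = 2 ^ card U"
    and bd: "\<forall>X\<in>Pow U. card {h\<in>M. P X h} \<le> K"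
  shows "card M \<le> 4 * K"
proof -
  have fP: "finite (Pow U)" using fU by simp
  have "(\<Sum>X\<in>Pow U. card {h\<in>M. P X h}) = (\<Sum>X\<in>Pow U. \<Sum>h\<in>M. if P X h then 1 else 0)"
    using fM by (simp add: sum.inter_filter[symmetric])
  also have "\<dots> = (\<Sum>h\<in>M. \<Sum>X\<in>Pow U. if P X h then 1 else 0)" by (rule sum.swap)
  also have "\<dots> = (\<Sum>h\<in>M. card {X\<in>Pow U. P X h})"
    using fP by (simp add: sum.inter_filter[symmetric])
  finally have eq: "(\<Sum>X\<in>Pow U. card {h\<in>M. P X h}) = (\<Sum>h\<in>M. card {X\<in>Pow U. P X h})" .
  have "4 * (\<Sum>h\<in>M. card {X\<in>Pow U. P X h}) = (\<Sum>h\<in>M. 4 * card {X\<in>Pow U. P X h})"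
    by (simp add: sum_distrib_left)
  also have "\<dots> = card M * 2 ^ card U" using cnt by simp
  finally have e2: "4 * (\<Sum>h\<in>M. card {X\<in>Pow U. P X h}) = card M * 2 ^ card U" .
  have "(\<Sum>X\<in>Pow U. card {h\<in>M. P X h}) \<le> (\<Sum>X\<in>Pow U. K)" using bd by (intro sum_mono) auto
  also have "\<dots> = 2 ^ card U * K" using fU by (simp add: card_Pow)
  finally have le: "(\<Sum>X\<in>Pow U. card {h\<in>M. P X h}) \<le> 2 ^ card U * K" .
  have "4 * (\<Sum>X\<in>Pow U. card {h\<in>M. P X h}) \<le> 4 * (2 ^ card U * K)" using le by (rule mult_le_mono2)
  then have "card M * 2 ^ card U \<le> 4 * (2 ^ card U * K)" unfolding eq e2 .
  then have "card M * 2 ^ card U \<le> (4 * K) * 2 ^ card U" by (simp add: algebra_simps)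
  then show ?thesis by simp
qed

lemma greedy:
  fixes R :: "'a \<Rightarrow> 'a \<Rightarrow> bool"
  assumes "finite S" "\<forall>x y. R x y \<longrightarrow> R y x" "\<forall>x\<in>S. card {y\<in>S. y \<noteq> x \<and> R x y} \<le> d"
  shows "\<exists>I\<subseteq>S. (\<forall>x\<in>I. \<forall>y\<in>I. x \<noteq> y \<longrightarrow> \<not> R x y) \<and> card S \<le> (d+1) * card I"
  using assms
proof (induction "card S" arbitrary: S rule: less_induct)
  case less
  show ?case
  proof (cases "S = {}")
    case True then show ?thesis by auto
  next
    case False
    then obtain x where x: "x \<in> S" by auto
    define Nx where "Nx = {y\<in>S. y \<noteq> x \<and> R x y}"
    define S' where "S' = S - insert x Nx"
    have fS': "finite S'" using less.prems by (simp add: S'_def)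
    have "S' \<subset> S" using x by (auto simp: S'_def)
    then have lt: "card S' < card S" using less.prems by (simp add: psubset_card_mono)
    have deg: "\<forall>z\<in>S'. card {y\<in>S'. y \<noteq> z \<and> R z y} \<le> d"
    proof
      fix z assume z: "z \<in> S'"
      have "card {y\<in>S'. y \<noteq> z \<and> R z y} \<le> card {y\<in>S. y \<noteq> z \<and> R z y}"
        using less.prems by (intro card_mono) (auto simp: S'_def)
      also have "\<dots> \<le> d" using less.prems z by (auto simp: S'_def)
      finally show "card {y\<in>S'. y \<noteq> z \<and> R z y} \<le> d" .
    qed
    obtain I' where I': "I' \<subseteq> S'" "\<forall>x\<in>I'. \<forall>y\<in>I'. x \<noteq> y \<longrightarrow> \<not> R x y"
      "card S' \<le> (d+1) * card I'"
      using less.hyps[OF lt fS' less.prems(2) deg] by blast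
    have xI': "x \<notin> I'" using I'(1) by (auto simp: S'_def)
    have fI': "finite I'" using I'(1) fS' finite_subset by blast
    have ind: "\<forall>a\<in>insert x I'. \<forall>b\<in>insert x I'. a \<noteq> b \<longrightarrow> \<not> R a b"
    proof (intro ballI impI)
      fix a b assume a: "a \<in> insert x I'" and b: "b \<in> insert x I'" and ab: "a \<noteq> b"
      have nx: "\<not> R x y" if "y \<in> I'" for y
        using that I'(1) by (auto simp: S'_def Nx_def)
      show "\<not> R a b"
        using a b ab I'(2) nx less.prems(2) by blast
    qed
    have "S \<subseteq> S' \<union> insert x Nx" by (auto simp: S'_def)
    then have "card S \<le> card (S' \<union> insert x Nx)"
      using less.prems by (intro card_mono) (auto simp: S'_def Nx_def)
    also have "\<dots> \<le> card S' + card (insert x Nx)" by (rule card_Un_le)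
    also have "\<dots> \<le> card S' + (card Nx + 1)"
      using less.prems(1) by (simp add: card_insert_if Nx_def)
    also have "\<dots> \<le> card S' + (d + 1)" using less.prems x by (auto simp: Nx_def)
    also have "\<dots> \<le> (d+1) * card (insert x I')" using I'(3) xI' fI' by simp
    finally show ?thesis using ind I'(1) x by (intro exI[of _ "insert x I'"]) (auto simp: S'_def)
  qed
qed

lemma priv_unique:
  assumes "finite H" "mult H p = 1" "h \<in> H" "p \<subseteq> h" "y \<in> H" "p \<subseteq> y"
  shows "y = h"
proof -
  have "card {B\<in>H. p \<subseteq> B} = 1" using assms by (simp add: mult_def)
  then obtain t where eq: "{B\<in>H. p \<subseteq> B} = {t}" by (meson card_1_singletonE)
  have "y \<in> {t}" "h \<in> {t}" using assms by (simp_all add: eq[symmetric])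
  then show ?thesis by simp
qed

lemma N_deg:
  assumes fin: "finite H" and card3: "\<forall>B\<in>H. card B = 3" and h: "h \<in> H" and ph: "p \<subseteq> h"
    and cp: "card p = 2" and mp: "mult H p = 1"
    and le2: "\<forall>e. e \<subseteq> h \<and> card e = 2 \<longrightarrow> mult H e \<le> 2"
  shows "card {y\<in>H. y \<noteq> h \<and> 2 \<le> card (h \<inter> y)} \<le> 2"
proof -
  have ch: "card h = 3" using card3 h by auto
  have fh: "finite h" using ch by (metis card.infinite zero_neq_numeral)
  have "card (h - p) = 1" using card_Diff_subset[OF finite_subset[OF ph fh] ph] ch cp by simp
  then obtain w where w: "h - p = {w}" by (meson card_1_singletonE)
  obtain a b where ab: "p = {a, b}" "a \<noteq> b" using cp by (meson card_2_iff)
  have wa: "w \<noteq> a" "w \<noteq> b" using w ab by auto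
  have hw: "h = {a, b, w}" using w ab ph by auto
  have one: "card ({B\<in>H. {z, w} \<subseteq> B} - {h}) \<le> 1" if "z \<in> p" for z
  proof -
    have zh: "z \<in> h" using that ph by blast
    have wh: "w \<in> h" "w \<notin> p" using w by blast+
    have zne: "z \<noteq> w" using that wh(2) by blast
    have zw: "{z, w} \<subseteq> h" "card {z, w} = 2" using zh wh(1) zne by simp_all
    have "mult H {z, w} \<le> 2" by (rule le2[rule_format, OF conjI[OF zw(1) zw(2)]])
    moreover have "h \<in> {B\<in>H. {z, w} \<subseteq> B}" using zw h by auto
    ultimately show ?thesis using fin by (simp add: mult_def card_Diff_singleton)
  qed
  have sub: "{y\<in>H. y \<noteq> h \<and> 2 \<le> card (h \<inter> y)} \<subseteq>
       ({B\<in>H. {a, w} \<subseteq> B} - {h}) \<union> ({B\<in>H. {b, w} \<subseteq> B} - {h})"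
  proof
    fix y assume y: "y \<in> {y\<in>H. y \<noteq> h \<and> 2 \<le> card (h \<inter> y)}"
    have wy: "w \<in> y"
    proof (rule ccontr)
      assume "w \<notin> y"
      then have "h \<inter> y \<subseteq> p" using w by auto
      moreover have "card (h \<inter> y) \<ge> 2" using y by auto
      ultimately have "h \<inter> y = p" using card_subset_eq[of p "h \<inter> y"] cp ab
        by (metis card_mono finite.emptyI finite.insertI le_antisym)
      then have "p \<subseteq> y" by auto
      then show False using priv_unique[OF fin mp h ph] y by auto
    qed
    have "\<exists>z\<in>h \<inter> y. z \<noteq> w"
    proof (rule ccontr)
      assume "\<not> ?thesis"
      then have "h \<inter> y \<subseteq> {w}" by auto
      then have "card (h \<inter> y) \<le> 1" using card_mono[of "{w}"] by fastforce
      then show False using y by auto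
    qed
    then obtain z where "z \<in> h" "z \<in> y" "z \<noteq> w" by auto
    then have "z = a \<or> z = b" using hw by auto
    then show "y \<in> ({B\<in>H. {a, w} \<subseteq> B} - {h}) \<union> ({B\<in>H. {b, w} \<subseteq> B} - {h})"
      using y wy \<open>z \<in> y\<close> by auto
  qed
  have "card {y\<in>H. y \<noteq> h \<and> 2 \<le> card (h \<inter> y)} \<le>
       card (({B\<in>H. {a, w} \<subseteq> B} - {h}) \<union> ({B\<in>H. {b, w} \<subseteq> B} - {h}))"
    using fin by (intro card_mono[OF _ sub]) auto
  also have "\<dots> \<le> card ({B\<in>H. {a, w} \<subseteq> B} - {h}) + card ({B\<in>H. {b, w} \<subseteq> B} - {h})"
    by (rule card_Un_le)
  also have "\<dots> \<le> 2" using one[of a] one[of b] ab by simp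
  finally show ?thesis .
qed

lemma card_le_pow: "G \<subseteq> Pow {..<n} \<Longrightarrow> card G \<le> 2 ^ n"
  using card_mono[of "Pow {..<n}" G] by (simp add: card_Pow)

lemma finite_bounded_nat: "(\<forall>x\<in>A. x \<le> (b::nat)) \<Longrightarrow> finite A"
  using finite_subset[of A "{..b}"] by auto

lemma ex_graph_ge:
  assumes "simple_graph n G" "\<not> has_cycle G m" shows "card G \<le> ex_graph n m"
proof -
  have "\<forall>x\<in>{card G | G. simple_graph n G \<and> \<not> has_cycle G m}. x \<le> 2 ^ n"
    by (auto simp: simple_graph_def intro!: card_le_pow)
  then have "finite {card G | G. simple_graph n G \<and> \<not> has_cycle G m}" by (rule finite_bounded_nat)
  then show ?thesis unfolding ex_graph_def using assms by (intro Max_ge) auto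
qed

lemma ex3_lin_ge:
  assumes "triple_hypergraph n H" "linear_hypergraph H" "\<not> has_berge_cycle H m"
  shows "card H \<le> ex3_lin n m"
proof -
  have "\<forall>x\<in>{card H | H. triple_hypergraph n H \<and> linear_hypergraph H \<and> \<not> has_berge_cycle H m}. x \<le> 2 ^ n"
    by (auto simp: triple_hypergraph_def intro!: card_le_pow)
  then have "finite {card H | H. triple_hypergraph n H \<and> linear_hypergraph H \<and> \<not> has_berge_cycle H m}"
    by (rule finite_bounded_nat)
  then show ?thesis unfolding ex3_lin_def using assms by (intro Max_ge) auto
qed

lemma triangles_sub:
  assumes "simple_graph n G" shows "triangles G \<subseteq> Pow {..<n}"
proof
  fix T assume T: "T \<in> triangles G"
  show "T \<in> Pow {..<n}"
  proof (rule PowI, rule subsetI)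
    fix x assume x: "x \<in> T"
    have "\<exists>y\<in>T. y \<noteq> x"
    proof (rule ccontr)
      assume "\<not> ?thesis"
      then have "T \<subseteq> {x}" by auto
      then have "card T \<le> 1" using card_mono[of "{x}" T] by simp
      then show False using T by (simp add: triangles_def)
    qed
    then obtain y where "y \<in> T" "y \<noteq> x" by auto
    then have "{x, y} \<in> G" using T x by (auto simp: triangles_def)
    then show "x \<in> {..<n}" using assms by (auto simp: simple_graph_def)
  qed
qed

lemma t_tri_ge:
  assumes "simple_graph n G" "\<not> has_cycle G m" shows "card (triangles G) \<le> t_tri m n"
proof -
  have "\<forall>x\<in>{card (triangles G) | G. simple_graph n G \<and> \<not> has_cycle G m}. x \<le> 2 ^ n"
  proof
    fix x assume "x \<in> {card (triangles G) | G. simple_graph n G \<and> \<not> has_cycle G m}"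
    then obtain G where "x = card (triangles G)" "simple_graph n G" by blast
    then show "x \<le> 2 ^ n" using card_le_pow[OF triangles_sub] by simp
  qed
  then have "finite {card (triangles G) | G. simple_graph n G \<and> \<not> has_cycle G m}"
    by (rule finite_bounded_nat)
  then show ?thesis unfolding t_tri_def using assms by (intro Max_ge) auto
qed

lemma main_bound:
  fixes k n :: nat
  assumes k: "k \<ge> 2" and tH: "triple_hypergraph n H" and nb: "\<not> has_berge_cycle H (2*k+1)"
  shows "card H \<le> t_tri (2*k+1) n + 4 * ex_graph n (2*k) + 12 * ex3_lin n (2*k+1)"
proof -
  have HP: "H \<subseteq> Pow {..<n}" using tH by (auto simp: triple_hypergraph_def)
  have fin: "finite H" using HP finite_subset by blast
  have card3: "\<forall>B\<in>H. card B = 3" using tH by (auto simp: triple_hypergraph_def)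
  define T where "T = {h\<in>H. \<forall>e. e \<subseteq> h \<and> card e = 2 \<longrightarrow> mult H e \<ge> 2}"
  define M3 where "M3 = {h\<in>H. h \<notin> T \<and> (\<exists>f. f \<subseteq> h \<and> card f = 2 \<and> mult H f \<ge> 3)}"
  define N where "N = {h\<in>H. h \<notin> T \<and> (\<forall>e. e \<subseteq> h \<and> card e = 2 \<longrightarrow> mult H e \<le> 2)}"
  define G2 where "G2 = {e. card e = 2 \<and> mult H e \<ge> 2}"
  have mult_pos: "mult H e \<ge> 1" if "h \<in> H" "e \<subseteq> h" for e h
  proof -
    have "{B\<in>H. e \<subseteq> B} \<noteq> {}" using that by auto
    then show ?thesis using fin by (simp add: mult_def Suc_le_eq card_gt_0_iff)
  qed
  have sg: "simple_graph n G2"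
    unfolding simple_graph_def G2_def
  proof (intro ballI conjI)
    fix e assume e: "e \<in> {e. card e = 2 \<and> 2 \<le> mult H e}"
    then have "card {B\<in>H. e \<subseteq> B} \<ge> 2" by (simp add: mult_def)
    then have "{B\<in>H. e \<subseteq> B} \<noteq> {}"
    proof (intro notI)
      assume a: "{B\<in>H. e \<subseteq> B} = {}"
      have "card {B\<in>H. e \<subseteq> B} = 0" unfolding a by simp
      then show False using \<open>card {B\<in>H. e \<subseteq> B} \<ge> 2\<close> by simp
    qed
    then obtain B where "B \<in> H" "e \<subseteq> B" by auto
    then show "e \<subseteq> {..<n}" using HP by auto
    show "card e = 2" using e by simp
  qed
  have ncG2: "\<not> has_cycle G2 (2*k+1)"
    unfolding G2_def by (rule T_no_cycle[OF fin card3 nb]) (use k in simp)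
  have "T \<subseteq> triangles G2"
  proof
    fix h assume h: "h \<in> T"
    have "card h = 3" using h card3 by (auto simp: T_def)
    moreover have "{x, y} \<in> G2" if "x \<in> h" "y \<in> h" "x \<noteq> y" for x y
      using h that by (auto simp: T_def G2_def)
    ultimately show "h \<in> triangles G2" by (auto simp: triangles_def)
  qed
  moreover have fTr: "finite (triangles G2)"
    using triangles_sub[OF sg] by (rule finite_subset) simp
  ultimately have "card T \<le> card (triangles G2)" by (intro card_mono)
  also have "\<dots> \<le> t_tri (2*k+1) n" using t_tri_ge[OF sg ncG2] .
  finally have bT: "card T \<le> t_tri (2*k+1) n" .
  have exp: "\<exists>e. e \<subseteq> h \<and> card e = 2 \<and> mult H e = 1" if "h \<in> H" "h \<notin> T" for h
  proof -
    have "\<not> (\<forall>e. e \<subseteq> h \<and> card e = 2 \<longrightarrow> mult H e \<ge> 2)" using that by (simp add: T_def)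
    then obtain e where "e \<subseteq> h" "card e = 2" "\<not> mult H e \<ge> 2" by blast
    moreover have "mult H e \<ge> 1" using mult_pos[OF that(1) \<open>e \<subseteq> h\<close>] .
    ultimately show ?thesis by (intro exI[of _ e]) auto
  qed
  define pr where "pr h = (SOME e. e \<subseteq> h \<and> card e = 2 \<and> mult H e = 1)" for h
  have pr: "pr h \<subseteq> h \<and> card (pr h) = 2 \<and> mult H (pr h) = 1" if "h \<in> H" "h \<notin> T" for h
    unfolding pr_def using someI_ex[OF exp[OF that]] .
  have prinj: "inj_on pr M3"
  proof (rule inj_onI)
    fix x y assume x: "x \<in> M3" and y: "y \<in> M3" and eq: "pr x = pr y"
    have "x \<in> H" "x \<notin> T" "y \<in> H" "y \<notin> T" using x y by (auto simp: M3_def)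
    then have px: "pr x \<subseteq> x" "mult H (pr x) = 1" and "pr y \<subseteq> y" using pr by auto
    then have "pr x \<subseteq> y" using eq by simp
    then have "y = x" using priv_unique[OF fin px(2) \<open>x \<in> H\<close> px(1) \<open>y \<in> H\<close>] by simp
    then show "x = y" by simp
  qed
  have bM3: "card M3 \<le> 4 * ex_graph n (2*k)"
  proof (rule avg[where U = "{..<n}" and P = "\<lambda>X h. condX X (pr h) h"])
    show "finite {..<n}" by simp
    show "finite M3" using fin by (simp add: M3_def)
    show "\<forall>h\<in>M3. 4 * card {X \<in> Pow {..<n}. condX X (pr h) h} = 2 ^ card {..<n}"
    proof
      fix h assume h: "h \<in> M3"
      have hH: "h \<in> H" "h \<notin> T" using h by (auto simp: M3_def)
      note p = pr[OF hH]
      have ch: "card h = 3" using card3 hH by auto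
      have fh: "finite h" using ch by (metis card.infinite zero_neq_numeral)
      have "card (h - pr h) = 1" using card_Diff_subset[OF finite_subset[OF _ fh]] p ch by simp
      then obtain c where c: "h - pr h = {c}" by (meson card_1_singletonE)
      obtain a b where ab: "pr h = {a, b}" "a \<noteq> b" using p by (meson card_2_iff)
      have hab: "h = {a, b, c}" using c ab p by auto
      have dist: "a \<noteq> c" "b \<noteq> c" using c ab by auto
      have inU: "a \<in> {..<n}" "b \<in> {..<n}" "c \<in> {..<n}" using hab hH HP by auto
      have "4 * card {X \<in> Pow {..<n}. condX X {a,b} {a,b,c}} = 2 ^ card {..<n}"
        using count4[OF _ inU ab(2) dist] by simp
      then show "4 * card {X \<in> Pow {..<n}. condX X (pr h) h} = 2 ^ card {..<n}"
        using ab hab by simp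
    qed
    show "\<forall>X\<in>Pow {..<n}. card {h \<in> M3. condX X (pr h) h} \<le> ex_graph n (2*k)"
    proof
      fix X assume X: "X \<in> Pow {..<n}"
      define S where "S = {h \<in> M3. condX X (pr h) h}"
      have SH: "S \<subseteq> H" by (auto simp: S_def M3_def)
      have Sp: "\<forall>h\<in>S. pr h \<subseteq> h \<and> card (pr h) = 2 \<and> mult H (pr h) = 1 \<and> condX X (pr h) h
              \<and> (\<exists>f. f \<subseteq> h \<and> card f = 2 \<and> mult H f \<ge> 3)"
        using pr by (auto simp: S_def M3_def)
      have nb': "\<not> has_berge_cycle H (Suc (2*k))" using nb by simp
      have nc: "\<not> has_cycle (pr ` S) (2*k)"
        by (rule M3_no_cycle[OF fin card3 nb' _ SH Sp]) (use k in simp)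
      have sgS: "simple_graph n (pr ` S)"
        unfolding simple_graph_def
      proof
        fix e assume "e \<in> pr ` S"
        then obtain h where h: "h \<in> S" "e = pr h" by blast
        have "h \<subseteq> {..<n}" using h SH HP by blast
        then show "e \<subseteq> {..<n} \<and> card e = 2" using Sp h by auto
      qed
      have "card S = card (pr ` S)"
        using prinj by (intro card_image[symmetric]) (auto simp: S_def intro: inj_on_subset)
      also have "\<dots> \<le> ex_graph n (2*k)" by (rule ex_graph_ge[OF sgS nc])
      finally show "card {h \<in> M3. condX X (pr h) h} \<le> ex_graph n (2*k)" by (simp add: S_def)
    qed
  qed
  define R where "R A B = (2 \<le> card (A \<inter> (B::nat set)))" for A B
  have fN: "finite N" using fin by (simp add: N_def)
  have symR: "\<forall>x y. R x y \<longrightarrow> R y x" by (simp add: R_def Int_commute)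
  have degN: "\<forall>x\<in>N. card {y\<in>N. y \<noteq> x \<and> R x y} \<le> 2"
  proof
    fix h assume h: "h \<in> N"
    have hH: "h \<in> H" "h \<notin> T" using h by (auto simp: N_def)
    note p = pr[OF hH]
    have le2: "\<forall>e. e \<subseteq> h \<and> card e = 2 \<longrightarrow> mult H e \<le> 2" using h by (simp add: N_def)
    have "card {y\<in>N. y \<noteq> h \<and> R h y} \<le> card {y\<in>H. y \<noteq> h \<and> 2 \<le> card (h \<inter> y)}"
      using fin by (intro card_mono) (auto simp: N_def R_def)
    also have "\<dots> \<le> 2" using N_deg[OF fin card3 hH(1) conjunct1[OF p] conjunct1[OF conjunct2[OF p]] conjunct2[OF conjunct2[OF p]] le2] .
    finally show "card {y\<in>N. y \<noteq> h \<and> R h y} \<le> 2" .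
  qed
  obtain I where I: "I \<subseteq> N" "\<forall>x\<in>I. \<forall>y\<in>I. x \<noteq> y \<longrightarrow> \<not> R x y" "card N \<le> 3 * card I"
    using greedy[OF fN symR degN] by auto
  have IH: "I \<subseteq> H" using I by (auto simp: N_def)
  have "triple_hypergraph n I" using tH IH by (auto simp: triple_hypergraph_def)
  moreover have "linear_hypergraph I"
    unfolding linear_hypergraph_def
  proof (intro ballI impI)
    fix A B assume "A \<in> I" "B \<in> I" "A \<noteq> B"
    then have "\<not> 2 \<le> card (A \<inter> B)" using I(2) unfolding R_def by blast
    then show "card (A \<inter> B) \<le> 1" by simp
  qed
  moreover have "\<not> has_berge_cycle I (2*k+1)"
  proof
    assume "has_berge_cycle I (2*k+1)"
    then obtain E v where "inj_on E {..<2*k+1}" "inj_on v {..<2*k+1}"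
      "\<forall>i<2*k+1. E i \<in> I \<and> {v i, v ((i + 1) mod (2*k+1))} \<subseteq> E i"
      unfolding has_berge_cycle_def by blast
    then have "has_berge_cycle H (2*k+1)" using IH unfolding has_berge_cycle_def by blast
    then show False using nb by simp
  qed
  ultimately have "card I \<le> ex3_lin n (2*k+1)" by (rule ex3_lin_ge)
  then have bN: "card N \<le> 12 * ex3_lin n (2*k+1)" using I(3) by linarith
  have "H \<subseteq> T \<union> M3 \<union> N" by (auto simp: T_def M3_def N_def not_le)
  then have "card H \<le> card (T \<union> M3 \<union> N)" using fin by (intro card_mono) (auto simp: T_def M3_def N_def)
  also have "\<dots> \<le> card (T \<union> M3) + card N" by (rule card_Un_le)
  also have "\<dots> \<le> card T + card M3 + card N" using card_Un_le[of T M3] by simp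
  finally show ?thesis using bT bM3 bN by linarith
qed

theorem theorem2:
  fixes k n :: nat
  assumes "k \<ge> 2" and "n \<ge> 1"
  shows "ex3 n (2*k+1) \<le> t_tri (2*k+1) n + 4 * ex_graph n (2*k) + 12 * ex3_lin n (2*k+1)"
proof -
  let ?A = "{card H | H. triple_hypergraph n H \<and> \<not> has_berge_cycle H (2*k+1)}"
  have "\<forall>x\<in>?A. x \<le> 2 ^ n"
    by (auto simp: triple_hypergraph_def intro!: card_le_pow)
  then have fA: "finite ?A" by (rule finite_bounded_nat)
  have "triple_hypergraph n {}" by (simp add: triple_hypergraph_def)
  moreover have "\<not> has_berge_cycle {} (2*k+1)" by (auto simp: has_berge_cycle_def)
  ultimately have "card ({}::nat set set) \<in> ?A" by blast
  then have ne: "?A \<noteq> {}" by blast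
  show ?thesis unfolding ex3_def
  proof (rule Max.boundedI[OF fA ne])
    fix a assume "a \<in> ?A"
    then obtain H where "a = card H" "triple_hypergraph n H" "\<not> has_berge_cycle H (2*k+1)" by blast
    then show "a \<le> t_tri (2*k+1) n + 4 * ex_graph n (2*k) + 12 * ex3_lin n (2*k+1)"
      using main_bound[OF assms(1)] by simp
  qed
qed

end
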